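(* Let ${\cal G}^{+a}_{Global}$ denote the class of scheduling games on identical machines of speed $1$ with a global priority list in which every job $i$ has processing-time function $p_i(t)=b_i+at$ with $b_i\ge0$ and a common rate $a>0$. For every integer $m\ge2$ and every real $a>0$ there exists a constant $c=c(m,a)>0$ such that for every integer $n\ge 2m+1$ there is a game in ${\cal G}^{+a}_{Global}$ with $m$ machines and $n$ jobs whose price of anarchy is at least $c\,(1+a)^{n/m}$. That is, $PoA({\cal G}^{+a}_{Global})=\Omega((1+a)^{n/m})$.
   Context: Scheduling game: a finite set $N$ of $n$ jobs (players) and a set $M$ of $m$ machines; machine $j$ has speed $s_j>0$. With a global priority list, all machines share the same bijection $\pi:N\to\{1,\dots,n\}$, and job $u$ has higher priority than $v$ iff $\pi(u)<\pi(v)$. A profile $\sigma\in M^N$ assigns each job to a machine. On machine $j$, the jobs assigned to it, listed in increasing $\pi$-order as $i_1,i_2,\dots$, are processed without idle time: $S_{i_1}(\sigma)=0$, $C_{i_k}(\sigma)=S_{i_k}(\sigma)+p_{i_k}(S_{i_k}(\sigma))/s_j$, $S_{i_{k+1}}(\sigma)=C_{i_k}(\sigma)$. The cost of job $i$ is $C_i(\sigma)$. A pure Nash equilibrium (NE) is a profile in which no job can strictly decrease its completion time by unilaterally changing its machine. Makespan $C_{\max}(\sigma)=\max_iC_i(\sigma)$; $OPT(G)=\min_\sigma C_{\max}(\sigma)$. $PoA(G)=\max_{\sigma\text{ NE}}C_{\max}(\sigma)/OPT(G)$. *)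

theory Defs
  imports Main Complex_Main
begin

text \<open>Jobs are 0..<n, machines are 0..<m, s j is the speed of machine j,
  p i is the (start-time dependent) processing-time function of job i,
  pr is the global priority (smaller value = higher priority),
  a profile sig maps each job to a machine.\<close>

definition profile :: "nat \<Rightarrow> nat \<Rightarrow> (nat \<Rightarrow> nat) \<Rightarrow> bool" where
  "profile m n sig \<longleftrightarrow> (\<forall>i<n. sig i < m)"

definition compl :: "nat \<Rightarrow> (nat \<Rightarrow> real) \<Rightarrow> (nat \<Rightarrow> real \<Rightarrow> real) \<Rightarrow> (nat \<Rightarrow> nat)
    \<Rightarrow> (nat \<Rightarrow> nat) \<Rightarrow> nat \<Rightarrow> real" where
  "compl n s p pr sig i =
     foldl (\<lambda>t u. t + p u t / s (sig i)) 0
       (filter (\<lambda>u. sig u = sig i \<and> pr u \<le> pr i) (sort_key pr [0..<n]))"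

definition is_NE :: "nat \<Rightarrow> nat \<Rightarrow> (nat \<Rightarrow> real) \<Rightarrow> (nat \<Rightarrow> real \<Rightarrow> real) \<Rightarrow> (nat \<Rightarrow> nat)
    \<Rightarrow> (nat \<Rightarrow> nat) \<Rightarrow> bool" where
  "is_NE m n s p pr sig \<longleftrightarrow> profile m n sig \<and>
     (\<forall>i<n. \<forall>j<m. compl n s p pr sig i \<le> compl n s p pr (sig(i := j)) i)"

definition makespan :: "nat \<Rightarrow> (nat \<Rightarrow> real) \<Rightarrow> (nat \<Rightarrow> real \<Rightarrow> real) \<Rightarrow> (nat \<Rightarrow> nat)
    \<Rightarrow> (nat \<Rightarrow> nat) \<Rightarrow> real" where
  "makespan n s p pr sig = Max ((\<lambda>i. compl n s p pr sig i) ` {..<n})"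

definition OPT :: "nat \<Rightarrow> nat \<Rightarrow> (nat \<Rightarrow> real) \<Rightarrow> (nat \<Rightarrow> real \<Rightarrow> real) \<Rightarrow> (nat \<Rightarrow> nat) \<Rightarrow> real" where
  "OPT m n s p pr = Inf {makespan n s p pr sig | sig. profile m n sig}"

definition PoA :: "nat \<Rightarrow> nat \<Rightarrow> (nat \<Rightarrow> real) \<Rightarrow> (nat \<Rightarrow> real \<Rightarrow> real) \<Rightarrow> (nat \<Rightarrow> nat) \<Rightarrow> real" where
  "PoA m n s p pr = Sup {makespan n s p pr sig / OPT m n s p pr | sig. is_NE m n s p pr sig}"

end

theory Submission imports Defs "HOL-Library.FuncSet" begin

definition F :: "real \<Rightarrow> (nat \<Rightarrow> real) \<Rightarrow> real \<Rightarrow> nat \<Rightarrow> real" where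
  "F a b = (\<lambda>t u. t + (b u + a * t) / 1)"

lemma compl_eq:
  "compl n (\<lambda>_. 1) (\<lambda>i t. b i + a * t) (\<lambda>i. i) sig i =
   foldl (F a b) 0 (filter (\<lambda>u. sig u = sig i \<and> u \<le> i) [0..<n])"
proof -
  have "sort_key (\<lambda>i. i) [0..<n] = [0..<n]"
    using sorted_sort_id[of "[0..<n]"] by simp
  then show ?thesis unfolding compl_def F_def by simp
qed

lemma filter_split:
  assumes "i < n"
  shows "filter (\<lambda>u. sig u = sig i \<and> u \<le> i) [0..<n] = filter (\<lambda>u. sig u = sig i) [0..<i] @ [i]"
proof -
  have "[0..<n] = [0..<i] @ i # [Suc i..<n]"
    using upt_add_eq_append[of 0 i "n - i"] upt_conv_Cons[of i n] assms by simp
  moreover have "filter (\<lambda>u. sig u = sig i \<and> u \<le> i) [Suc i..<n] = []"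
    by (simp add: filter_empty_conv)
  moreover have "filter (\<lambda>u. sig u = sig i \<and> u \<le> i) [0..<i] = filter (\<lambda>u. sig u = sig i) [0..<i]"
    by (rule filter_cong) auto
  ultimately show ?thesis by simp
qed

lemma foldl_nonneg:
  assumes "t \<ge> 0" "a > 0" "\<forall>u. b u \<ge> 0"
  shows "foldl (F a b) t xs \<ge> t"
  using assms(1)
proof (induction xs arbitrary: t)
  case Nil then show ?case by simp
next
  case (Cons x xs)
  have "F a b t x \<ge> t" using Cons.prems assms by (simp add: F_def)
  then have "foldl (F a b) (F a b t x) xs \<ge> F a b t x" using Cons by simp
  then show ?case using \<open>F a b t x \<ge> t\<close> by simp
qed

lemma foldl_zero:
  assumes "\<forall>u\<in>set xs. b u = 0"
  shows "foldl (F a b) t xs = t * (1 + a) ^ length xs"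
  using assms
  by (induction xs arbitrary: t) (auto simp: F_def algebra_simps)

lemma foldl_bound:
  assumes "t \<ge> 0" "a > 0" "\<forall>u. b u \<ge> 0 \<and> b u \<le> 1"
  shows "foldl (F a b) t xs + 1 \<le> (t + 1) * (2 + a) ^ length xs"
  using assms(1)
proof (induction xs arbitrary: t)
  case Nil then show ?case by simp
next
  case (Cons x xs)
  have h0: "F a b t x \<ge> 0" using Cons.prems assms by (simp add: F_def)
  have h1: "F a b t x + 1 \<le> (t + 1) * (2 + a)"
    using Cons.prems assms(2) assms(3)[rule_format, of x] by (simp add: F_def algebra_simps)
  have "foldl (F a b) (F a b t x) xs + 1 \<le> (F a b t x + 1) * (2 + a) ^ length xs"
    using Cons.IH h0 by simp
  also have "\<dots> \<le> (t + 1) * (2 + a) * (2 + a) ^ length xs"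
    using h1 assms(2) by (intro mult_right_mono) auto
  finally show ?case by (simp add: algebra_simps)
qed

lemma compl_split:
  assumes "i < n"
  shows "compl n (\<lambda>_. 1) (\<lambda>i t. b i + a * t) (\<lambda>i. i) sig i =
    foldl (F a b) 0 (filter (\<lambda>u. sig u = sig i) [0..<i]) + b i
    + a * foldl (F a b) 0 (filter (\<lambda>u. sig u = sig i) [0..<i])"
  unfolding compl_eq filter_split[OF assms] by (simp add: F_def)

lemma compl_restrict:
  assumes "\<forall>u<n. sig' u = sig u" "i < n"
  shows "compl n s p pr sig' i = compl n s p pr sig i"
proof -
  have "filter (\<lambda>u. sig' u = sig' i \<and> pr u \<le> pr i) (sort_key pr [0..<n])
      = filter (\<lambda>u. sig u = sig i \<and> pr u \<le> pr i) (sort_key pr [0..<n])"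
    by (rule filter_cong) (use assms in auto)
  then show ?thesis unfolding compl_def using assms by simp
qed

lemma makespan_restrict:
  assumes "\<forall>u<n. sig' u = sig u"
  shows "makespan n s p pr sig' = makespan n s p pr sig"
  unfolding makespan_def using compl_restrict[OF assms] by (metis (no_types, lifting) image_cong lessThan_iff)

lemma list_mod:
  assumes "j < (m::nat)"
  shows "filter (\<lambda>u. u mod m = j) [0..<i] = (if j < i then j # filter (\<lambda>u. u mod m = j) [Suc j..<i] else [])"
proof (cases "j < i")
  case True
  have "[0..<i] = [0..<j] @ j # [Suc j..<i]"
    using upt_add_eq_append[of 0 j "i - j"] upt_conv_Cons[of j i] True by simp
  moreover have "filter (\<lambda>u. u mod m = j) [0..<j] = []"
    using assms by (auto simp: filter_empty_conv)
  ultimately show ?thesis using True assms by simp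
next
  case False
  have "filter (\<lambda>u. u mod m = j) [0..<i] = []"
    using assms False by (auto simp: filter_empty_conv)
  then show ?thesis using False by simp
qed

definition bm :: "nat \<Rightarrow> nat \<Rightarrow> real" where
  "bm m i = (if i < m then 1 else 0)"

definition Tf :: "real \<Rightarrow> nat \<Rightarrow> real" where
  "Tf a L = (if L = 0 then 0 else (1 + a) ^ (L - 1))"

lemma Tf_mono:
  assumes "a > 0" "L1 \<le> L2"
  shows "Tf a L1 \<le> Tf a L2"
proof (cases "L1 = 0")
  case True then show ?thesis using assms by (simp add: Tf_def)
next
  case False
  then have "(1 + a) ^ (L1 - 1) \<le> (1 + a) ^ (L2 - 1)"
    using assms by (intro power_increasing) auto
  then show ?thesis using False assms by (simp add: Tf_def)
qed

lemma T_val: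
  assumes "j < (m::nat)" "a > 0"
  shows "foldl (F a (bm m)) 0 (filter (\<lambda>u. u mod m = j) [0..<i]) =
    Tf a (length (filter (\<lambda>u. u mod m = j) [0..<i]))"
proof (cases "j < i")
  case True
  let ?ys = "filter (\<lambda>u. u mod m = j) [Suc j..<i]"
  have z: "\<forall>u\<in>set ?ys. bm m u = 0"
  proof
    fix u assume "u \<in> set ?ys"
    then have "u mod m = j" "u > j" by auto
    then have "\<not> u < m" using mod_less by fastforce
    then show "bm m u = 0" by (simp add: bm_def)
  qed
  have "F a (bm m) 0 j = 1" using assms by (simp add: F_def bm_def)
  then show ?thesis using list_mod[OF assms(1), of i] True foldl_zero[OF z, of a 1] by (simp add: Tf_def)
next
  case False
  then show ?thesis using list_mod[OF assms(1), of i] by (simp add: Tf_def)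
qed

lemma len_card: "length (filter P [0..<i]) = card {u. u < i \<and> P u}"
  unfolding length_filter_conv_card by (rule arg_cong[where f=card]) auto

lemma card_lower:
  assumes "j < (m::nat)"
  shows "i div m \<le> card {u. u < i \<and> u mod m = j}"
proof -
  have sub: "(\<lambda>q. j + m * q) ` {..<i div m} \<subseteq> {u. u < i \<and> u mod m = j}"
  proof
    fix x assume "x \<in> (\<lambda>q. j + m * q) ` {..<i div m}"
    then obtain q where q: "q < i div m" "x = j + m * q" by auto
    have "Suc q \<le> i div m" using q by simp
    then have "m * Suc q \<le> m * (i div m)" by (rule mult_le_mono2)
    also have "\<dots> \<le> i" by simp
    finally have "x < i" using q assms by simp
    moreover have "x mod m = j" using q assms by simp
    ultimately show "x \<in> {u. u < i \<and> u mod m = j}" by simp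
  qed
  have inj: "inj_on (\<lambda>q. j + m * q) {..<i div m}"
    using assms by (auto simp: inj_on_def)
  have fin: "finite {u. u < i \<and> u mod m = j}" by simp
  have "card ((\<lambda>q. j + m * q) ` {..<i div m}) = i div m"
    using card_image[OF inj] by simp
  then show ?thesis using card_mono[OF fin sub] by simp
qed

lemma card_upper:
  assumes "0 < (m::nat)"
  shows "card {u. u < i \<and> u mod m = i mod m} \<le> i div m"
proof -
  have sub: "{u. u < i \<and> u mod m = i mod m} \<subseteq> (\<lambda>q. i mod m + m * q) ` {..<i div m}"
  proof
    fix u assume u: "u \<in> {u. u < i \<and> u mod m = i mod m}"
    have e0: "u = m * (u div m) + u mod m" by simp
    have "u mod m = i mod m" using u by simp
    then have e: "u = i mod m + m * (u div m)" using e0 by linarith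
    have "u div m < i div m"
    proof (rule ccontr)
      assume "\<not> u div m < i div m"
      then have "m * (i div m) \<le> m * (u div m)" by simp
      moreover have "i = m * (i div m) + i mod m" by simp
      ultimately have "i \<le> u" using e by linarith
      then show False using u by simp
    qed
    then show "u \<in> (\<lambda>q. i mod m + m * q) ` {..<i div m}" using e by auto
  qed
  have "card {u. u < i \<and> u mod m = i mod m} \<le> card ((\<lambda>q. i mod m + m * q) ` {..<i div m})"
    by (rule card_mono[OF _ sub]) simp
  also have "\<dots> \<le> i div m" using card_image_le[of "{..<i div m}"] by simp
  finally show ?thesis .
qed

lemma is_NE_mod:
  assumes "0 < m" "a > 0"
  shows "is_NE m n (\<lambda>_. 1) (\<lambda>i t. bm m i + a * t) (\<lambda>i. i) (\<lambda>i. i mod m)"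
  unfolding is_NE_def profile_def
proof (intro conjI allI impI)
  fix i assume "i < n" then show "i mod m < m" using assms by simp
next
  fix i j assume i: "i < n" and j: "j < m"
  let ?sig = "(\<lambda>i. i mod (m::nat))"
  let ?sig' = "?sig(i := j)"
  let ?G = "\<lambda>xs. foldl (F a (bm m)) 0 xs"
  have L: "compl n (\<lambda>_. 1) (\<lambda>i t. bm m i + a * t) (\<lambda>i. i) ?sig i =
    ?G (filter (\<lambda>u. u mod m = i mod m) [0..<i]) + bm m i + a * ?G (filter (\<lambda>u. u mod m = i mod m) [0..<i])"
    using compl_split[OF i, where b="bm m" and a=a and sig="?sig"] by simp
  have fe: "filter (\<lambda>u. ?sig' u = ?sig' i) [0..<i] = filter (\<lambda>u. u mod m = j) [0..<i]"
    by (rule filter_cong) auto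
  have R: "compl n (\<lambda>_. 1) (\<lambda>i t. bm m i + a * t) (\<lambda>i. i) ?sig' i =
    ?G (filter (\<lambda>u. u mod m = j) [0..<i]) + bm m i + a * ?G (filter (\<lambda>u. u mod m = j) [0..<i])"
    using compl_split[OF i, where b="bm m" and a=a and sig="?sig'"] fe by simp
  have "length (filter (\<lambda>u. u mod m = i mod m) [0..<i]) \<le> i div m"
    using card_upper[OF assms(1), of i] len_card by simp
  also have "\<dots> \<le> length (filter (\<lambda>u. u mod m = j) [0..<i])"
    using card_lower[OF j, of i] len_card by simp
  finally have "Tf a (length (filter (\<lambda>u. u mod m = i mod m) [0..<i])) \<le> Tf a (length (filter (\<lambda>u. u mod m = j) [0..<i]))"
    using Tf_mono assms(2) by blast
  then have X: "?G (filter (\<lambda>u. u mod m = i mod m) [0..<i]) \<le> ?G (filter (\<lambda>u. u mod m = j) [0..<i])"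
    using T_val[OF j assms(2)] T_val[of "i mod m" m a i] assms by simp
  then have "a * ?G (filter (\<lambda>u. u mod m = i mod m) [0..<i]) \<le> a * ?G (filter (\<lambda>u. u mod m = j) [0..<i])"
    using assms(2) by (intro mult_left_mono) auto
  then show "compl n (\<lambda>_. 1) (\<lambda>i t. bm m i + a * t) (\<lambda>i. i) ?sig i
       \<le> compl n (\<lambda>_. 1) (\<lambda>i t. bm m i + a * t) (\<lambda>i. i) ?sig' i"
    unfolding L R using X by linarith
qed

lemma compl_last:
  assumes "0 < m" "a > 0" "m < n"
  shows "compl n (\<lambda>_. 1) (\<lambda>i t. bm m i + a * t) (\<lambda>i. i) (\<lambda>i. i mod m) (n - 1) = (1 + a) ^ ((n - 1) div m)"
proof -
  let ?i = "n - 1"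
  let ?G = "\<lambda>xs. foldl (F a (bm m)) 0 xs"
  let ?xs = "filter (\<lambda>u. u mod m = ?i mod m) [0..<?i]"
  have i: "?i < n" using assms by simp
  have L: "compl n (\<lambda>_. 1) (\<lambda>i t. bm m i + a * t) (\<lambda>i. i) (\<lambda>i. i mod m) ?i =
    ?G ?xs + bm m ?i + a * ?G ?xs"
    using compl_split[OF i, where b="bm m" and a=a and sig="\<lambda>i. i mod m"] by simp
  have len: "length ?xs = ?i div m"
    using card_upper[OF assms(1), of ?i] card_lower[of "?i mod m" m ?i] len_card assms(1) by simp
  have pos: "?i div m \<ge> 1" using div_le_mono[of m "n - 1" m] assms by simp
  have "?G ?xs = Tf a (?i div m)"
    using T_val[of "?i mod m" m a ?i] assms len by simp
  also have "\<dots> = (1 + a) ^ (?i div m - 1)" using pos by (simp add: Tf_def)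
  finally have "?G ?xs = (1 + a) ^ (?i div m - 1)" .
  moreover have "bm m ?i = 0" using assms by (simp add: bm_def)
  ultimately have "compl n (\<lambda>_. 1) (\<lambda>i t. bm m i + a * t) (\<lambda>i. i) (\<lambda>i. i mod m) ?i = (1 + a) * (1 + a) ^ (?i div m - 1)"
    using L by (simp add: algebra_simps)
  also have "\<dots> = (1 + a) ^ (?i div m)" using pos by (metis Suc_diff_le diff_Suc_1 power_Suc)
  finally show ?thesis .
qed

lemma bm_nonneg: "\<forall>u. bm m u \<ge> 0 \<and> bm m u \<le> 1"
  by (simp add: bm_def)

lemma makespan_ge1:
  assumes "0 < m" "0 < n" "a > 0"
  shows "makespan n (\<lambda>_. 1) (\<lambda>i t. bm m i + a * t) (\<lambda>i. i) sig \<ge> 1"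
proof -
  let ?G = "foldl (F a (bm m)) 0 (filter (\<lambda>u. sig u = sig 0) [0..<0])"
  have c: "compl n (\<lambda>_. 1) (\<lambda>i t. bm m i + a * t) (\<lambda>i. i) sig 0 = ?G + bm m 0 + a * ?G"
    using compl_split[OF assms(2), where b="bm m" and a=a and sig=sig] by simp
  have "?G \<ge> 0" using foldl_nonneg[of 0 a "bm m"] assms bm_nonneg by simp
  then have "compl n (\<lambda>_. 1) (\<lambda>i t. bm m i + a * t) (\<lambda>i. i) sig 0 \<ge> 1"
    unfolding c using assms by (simp add: bm_def)
  also have "compl n (\<lambda>_. 1) (\<lambda>i t. bm m i + a * t) (\<lambda>i. i) sig 0 \<le> makespan n (\<lambda>_. 1) (\<lambda>i t. bm m i + a * t) (\<lambda>i. i) sig"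
    unfolding makespan_def using assms by (intro Max_ge) auto
  finally show ?thesis .
qed

lemma makespan_sig0:
  assumes "0 < m" "0 < n" "a > 0"
  shows "makespan n (\<lambda>_. 1) (\<lambda>i t. bm m i + a * t) (\<lambda>i. i) (\<lambda>i. if i < m then 0 else 1) \<le> (2 + a) ^ m"
  unfolding makespan_def
proof (rule Max.boundedI)
  show "finite ((\<lambda>i. compl n (\<lambda>_. 1) (\<lambda>i t. bm m i + a * t) (\<lambda>i. i) (\<lambda>i. if i < m then 0 else 1) i) ` {..<n})" by simp
  show "(\<lambda>i. compl n (\<lambda>_. 1) (\<lambda>i t. bm m i + a * t) (\<lambda>i. i) (\<lambda>i. if i < m then 0 else 1) i) ` {..<n} \<noteq> {}" using assms by auto
next
  fix x assume "x \<in> (\<lambda>i. compl n (\<lambda>_. 1) (\<lambda>i t. bm m i + a * t) (\<lambda>i. i) (\<lambda>i. if i < m then 0 else 1) i) ` {..<n}"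
  then obtain i where i: "i < n" and x: "x = compl n (\<lambda>_. 1) (\<lambda>i t. bm m i + a * t) (\<lambda>i. i) (\<lambda>i. if i < m then (0::nat) else 1) i" by auto
  let ?sig = "\<lambda>i. if i < m then (0::nat) else 1"
  let ?xs = "filter (\<lambda>u. ?sig u = ?sig i \<and> u \<le> i) [0..<n]"
  have x2: "x = foldl (F a (bm m)) 0 ?xs" using x compl_eq by simp
  show "x \<le> (2 + a) ^ m"
  proof (cases "i < m")
    case True
    have "length ?xs = card {u. u < n \<and> ?sig u = ?sig i \<and> u \<le> i}" by (rule len_card)
    also have "\<dots> \<le> card {..<m}"
      by (rule card_mono) (use True in \<open>auto split: if_splits\<close>)
    finally have len: "length ?xs \<le> m" by simp
    have "foldl (F a (bm m)) 0 ?xs + 1 \<le> (0 + 1) * (2 + a) ^ length ?xs"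
      using foldl_bound[of 0 a "bm m" ?xs] assms bm_nonneg by simp
    also have "\<dots> \<le> (2 + a) ^ m" using len assms by (simp add: power_increasing)
    finally show ?thesis using x2 by simp
  next
    case False
    have "\<forall>u\<in>set ?xs. bm m u = 0" using False by (auto simp: bm_def split: if_splits)
    then have "x = 0" using x2 foldl_zero by simp
    then show ?thesis using assms by simp
  qed
qed

theorem theorem10:
  shows "\<forall>m::nat. m \<ge> 2 \<longrightarrow> (\<forall>a::real. a > 0 \<longrightarrow>
    (\<exists>c::real. c > 0 \<and> (\<forall>n::nat. n \<ge> 2 * m + 1 \<longrightarrow>
      (\<exists>(b :: nat \<Rightarrow> real) (pr :: nat \<Rightarrow> nat).
         (\<forall>i<n. b i \<ge> 0) \<and> bij_betw pr {..<n} {..<n} \<and>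
         PoA m n (\<lambda>_. 1) (\<lambda>i t. b i + a * t) pr \<ge> c * (1 + a) powr (real n / real m)))))"
proof (intro allI impI)
  fix m :: nat and a :: real
  assume m2: "m \<ge> 2" and a: "a > 0"
  define c where "c = 1 / ((1 + a) * (2 + a) ^ m)"
  have cpos: "c > 0" using a by (simp add: c_def)
  show "\<exists>c::real. c > 0 \<and> (\<forall>n::nat. n \<ge> 2 * m + 1 \<longrightarrow>
      (\<exists>(b :: nat \<Rightarrow> real) (pr :: nat \<Rightarrow> nat).
         (\<forall>i<n. b i \<ge> 0) \<and> bij_betw pr {..<n} {..<n} \<and>
         PoA m n (\<lambda>_. 1) (\<lambda>i t. b i + a * t) pr \<ge> c * (1 + a) powr (real n / real m)))"
  proof (intro exI[of _ c] conjI allI impI)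
    show "c > 0" by (rule cpos)
    fix n :: nat assume n: "n \<ge> 2 * m + 1"
    have m0: "0 < m" and n0: "0 < n" and mn: "m < n" using m2 n by auto
    let ?S = "\<lambda>_::nat. 1::real"
    let ?P = "\<lambda>i t. bm m i + a * t"
    let ?PR = "\<lambda>i::nat. i"
    let ?O = "OPT m n ?S ?P ?PR"
    let ?sig0 = "\<lambda>i::nat. if i < m then (0::nat) else 1"
    let ?sigNE = "\<lambda>i::nat. i mod m"
    let ?K = "(n - 1) div m"
    have prof0: "profile m n ?sig0" using m2 by (simp add: profile_def)
    have Oge: "?O \<ge> 1"
      unfolding OPT_def
    proof (rule cInf_greatest)
      show "{makespan n ?S ?P ?PR sig |sig. profile m n sig} \<noteq> {}" using prof0 by blast
      fix x assume "x \<in> {makespan n ?S ?P ?PR sig |sig. profile m n sig}"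
      then show "1 \<le> x" using makespan_ge1[OF m0 n0 a] by blast
    qed
    have Ole: "?O \<le> (2 + a) ^ m"
    proof -
      have "?O \<le> makespan n ?S ?P ?PR ?sig0"
        unfolding OPT_def
      proof (rule cInf_lower)
        show "makespan n ?S ?P ?PR ?sig0 \<in> {makespan n ?S ?P ?PR sig |sig. profile m n sig}"
          using prof0 by blast
        show "bdd_below {makespan n ?S ?P ?PR sig |sig. profile m n sig}"
          unfolding bdd_below_def using makespan_ge1[OF m0 n0 a] by blast
      qed
      also have "\<dots> \<le> (2 + a) ^ m" by (rule makespan_sig0[OF m0 n0 a])
      finally show ?thesis .
    qed
    have NE: "is_NE m n ?S ?P ?PR ?sigNE" by (rule is_NE_mod[OF m0 a])
    have mkNE: "makespan n ?S ?P ?PR ?sigNE \<ge> (1 + a) ^ ?K"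
    proof -
      have "compl n ?S ?P ?PR ?sigNE (n - 1) \<le> makespan n ?S ?P ?PR ?sigNE"
        unfolding makespan_def using n0 by (intro Max_ge) auto
      then show ?thesis using compl_last[OF m0 a mn] by simp
    qed
    let ?B = "{makespan n ?S ?P ?PR sig / ?O |sig. is_NE m n ?S ?P ?PR sig}"
    have fin: "finite ?B"
    proof (rule finite_subset)
      show "?B \<subseteq> (\<lambda>sig. makespan n ?S ?P ?PR sig / ?O) ` (PiE {..<n} (\<lambda>_. {..<m}))"
      proof
        fix x assume "x \<in> ?B"
        then obtain sig where x: "x = makespan n ?S ?P ?PR sig / ?O" and ne: "is_NE m n ?S ?P ?PR sig" by blast
        have r1: "restrict sig {..<n} \<in> PiE {..<n} (\<lambda>_. {..<m})"
          using ne unfolding is_NE_def profile_def by (simp add: PiE_iff)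
        have r2: "makespan n ?S ?P ?PR (restrict sig {..<n}) = makespan n ?S ?P ?PR sig"
          by (rule makespan_restrict) simp
        have "x = (\<lambda>sig. makespan n ?S ?P ?PR sig / ?O) (restrict sig {..<n})"
          using x r2 by simp
        then show "x \<in> (\<lambda>sig. makespan n ?S ?P ?PR sig / ?O) ` (PiE {..<n} (\<lambda>_. {..<m}))"
          using r1 by (rule image_eqI)
      qed
      show "finite ((\<lambda>sig. makespan n ?S ?P ?PR sig / ?O) ` (PiE {..<n} (\<lambda>_. {..<m})))"
        by (intro finite_imageI finite_PiE) auto
    qed
    have PoAge: "PoA m n ?S ?P ?PR \<ge> makespan n ?S ?P ?PR ?sigNE / ?O"
      unfolding PoA_def
      by (rule cSup_upper) (use NE fin in \<open>auto intro: bdd_above_finite\<close>)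
    have "makespan n ?S ?P ?PR ?sigNE / ?O \<ge> (1 + a) ^ ?K / ?O"
      using mkNE Oge by (intro divide_right_mono) auto
    moreover have "(1 + a) ^ ?K / ?O \<ge> (1 + a) ^ ?K / (2 + a) ^ m"
      using Oge Ole a by (intro divide_left_mono) auto
    moreover have "c * (1 + a) powr (real n / real m) \<le> (1 + a) ^ ?K / (2 + a) ^ m"
    proof -
      have "n - 1 < m + m * ?K"
        using dividend_less_times_div[OF m0, of "n - 1"] by simp
      then have "n \<le> m * (?K + 1)" by (simp add: algebra_simps)
      then have "real n \<le> real (m * (?K + 1))" by (simp only: of_nat_le_iff)
      then have "real n \<le> real m * (real ?K + 1)" by (simp add: algebra_simps)
      then have "real n / real m \<le> real ?K + 1" using m0 by (simp add: divide_le_eq mult.commute)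
      then have "(1 + a) powr (real n / real m) \<le> (1 + a) powr (real ?K + 1)"
        using a by (intro powr_mono) auto
      also have "(1 + a) powr (real ?K + 1) = (1 + a) powr (real (?K + 1))" by (simp add: add.commute)
      also have "\<dots> = (1 + a) ^ (?K + 1)"
        by (rule powr_realpow) (use a in simp)
      finally have h: "(1 + a) powr (real n / real m) \<le> (1 + a) ^ (?K + 1)" .
      have "c * (1 + a) powr (real n / real m) \<le> c * (1 + a) ^ (?K + 1)"
        using h cpos by (intro mult_left_mono) auto
      also have "\<dots> = ((1 + a) * (1 + a) ^ ?K) / ((1 + a) * (2 + a) ^ m)"
        by (simp add: c_def)
      also have "\<dots> = (1 + a) ^ ?K / (2 + a) ^ m"
        using a by (intro mult_divide_mult_cancel_left) simp
      finally show ?thesis .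
    qed
    ultimately have "PoA m n ?S ?P ?PR \<ge> c * (1 + a) powr (real n / real m)"
      using PoAge by linarith
    moreover have "\<forall>i<n. bm m i \<ge> 0" by (simp add: bm_def)
    moreover have "bij_betw ?PR {..<n} {..<n}" by (simp add: bij_betw_def)
    ultimately show "\<exists>(b :: nat \<Rightarrow> real) (pr :: nat \<Rightarrow> nat).
         (\<forall>i<n. b i \<ge> 0) \<and> bij_betw pr {..<n} {..<n} \<and>
         PoA m n (\<lambda>_. 1) (\<lambda>i t. b i + a * t) pr \<ge> c * (1 + a) powr (real n / real m)"
      by blast
  qed
qed

end
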